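(* Let $F$ be a commutative field. Then $\mathrm{PG}(4,F)$ admits no linear line partition.
   Context: A line spread of a projective space is a set of lines such that each point lies on exactly one of them. A line partition $\Omega$ of $\mathrm{PG}(n,F)$ is a partition of its set of lines into line spreads of hyperplanes such that each hyperplane contains exactly one of these spreads; $\pi_\Omega$ maps each line to the hyperplane containing its class. $\Omega$ is linear if $\pi_\Omega$ is a linear mapping from the Grassmannian of lines (points = lines of $\mathrm{PG}(n,F)$, G-lines = pencils of lines through a point in a plane) to the dual space $\mathrm{PG}(n,F)^*$; since $\pi_\Omega$ is everywhere defined, this means that every pencil of lines is mapped bijectively onto a pencil of hyperplanes through some $(n-2)$-subspace. *)

theory Defs
  imports "HOL-Analysis.Analysis"
begin

text \<open>PG(4,F) is modelled via the vector space F^5 (type 'a^5, 'a a field,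
  i.e. commutative). A projective subspace of projective dimension d is a
  linear subspace of vector dimension d+1.\<close>

definition pg_sub :: "nat \<Rightarrow> ('a::field ^ 5) set \<Rightarrow> bool" where
  "pg_sub d U \<longleftrightarrow> vec.subspace U \<and> vec.dim U = d + 1"

definition pg_point :: "('a::field ^ 5) set \<Rightarrow> bool" where
  "pg_point U \<longleftrightarrow> pg_sub 0 U"

definition pg_line :: "('a::field ^ 5) set \<Rightarrow> bool" where
  "pg_line U \<longleftrightarrow> pg_sub 1 U"

definition pg_plane :: "('a::field ^ 5) set \<Rightarrow> bool" where
  "pg_plane U \<longleftrightarrow> pg_sub 2 U"

definition pg_hyperplane :: "('a::field ^ 5) set \<Rightarrow> bool" where
  "pg_hyperplane U \<longleftrightarrow> pg_sub 3 U"

definition line_spread :: "('a::field ^ 5) set \<Rightarrow> ('a ^ 5) set set \<Rightarrow> bool" where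
  "line_spread H S \<longleftrightarrow>
     (\<forall>L\<in>S. pg_line L \<and> L \<subseteq> H) \<and>
     (\<forall>P. pg_point P \<and> P \<subseteq> H \<longrightarrow> (\<exists>!L. L \<in> S \<and> P \<subseteq> L))"

definition line_partition :: "('a::field ^ 5) set set set \<Rightarrow> bool" where
  "line_partition \<Omega> \<longleftrightarrow>
     (\<forall>S\<in>\<Omega>. S \<noteq> {}) \<and>
     \<Union>\<Omega> = {L. pg_line L} \<and>
     (\<forall>S\<in>\<Omega>. \<forall>T\<in>\<Omega>. S \<noteq> T \<longrightarrow> S \<inter> T = {}) \<and>
     (\<forall>S\<in>\<Omega>. \<exists>H. pg_hyperplane H \<and> line_spread H S) \<and>
     (\<forall>H. pg_hyperplane H \<longrightarrow> (\<exists>!S. S \<in> \<Omega> \<and> (\<forall>L\<in>S. L \<subseteq> H)))"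

definition pi_Omega :: "('a::field ^ 5) set set set \<Rightarrow> ('a ^ 5) set \<Rightarrow> ('a ^ 5) set" where
  "pi_Omega \<Omega> L = (THE H. pg_hyperplane H \<and> (\<exists>S\<in>\<Omega>. L \<in> S \<and> line_spread H S))"

definition line_pencil :: "('a::field ^ 5) set \<Rightarrow> ('a ^ 5) set \<Rightarrow> ('a ^ 5) set set" where
  "line_pencil P \<sigma> = {L. pg_line L \<and> P \<subseteq> L \<and> L \<subseteq> \<sigma>}"

definition hyperplane_pencil :: "('a::field ^ 5) set \<Rightarrow> ('a ^ 5) set set" where
  "hyperplane_pencil W = {H. pg_hyperplane H \<and> W \<subseteq> H}"

definition linear_line_partition :: "('a::field ^ 5) set set set \<Rightarrow> bool" where
  "linear_line_partition \<Omega> \<longleftrightarrow> line_partition \<Omega> \<and>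
     (\<forall>P \<sigma>. pg_point P \<and> pg_plane \<sigma> \<and> P \<subseteq> \<sigma> \<longrightarrow>
        (\<exists>W. pg_sub 2 W \<and> bij_betw (pi_Omega \<Omega>) (line_pencil P \<sigma>) (hyperplane_pencil W)))"

end

theory Submission
  imports Defs
begin

lemma sub_eq:
  fixes A B :: "('a::field ^ 5) set"
  assumes "vec.subspace A" "vec.subspace B" "A \<subseteq> B" "vec.dim B \<le> vec.dim A"
  shows "A = B"
  using vec.subspace_dim_equal assms by blast

lemma point_span:
  fixes v :: "'a::field ^ 5"
  assumes "v \<noteq> 0"
  shows "pg_point (vec.span {v})"
  using assms unfolding pg_point_def pg_sub_def by simp

lemma spread_hyp_unique:
  fixes H H' :: "('a::field ^ 5) set"
  assumes "pg_hyperplane H" "pg_hyperplane H'" "line_spread H S" "line_spread H' S"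
  shows "H = H'"
proof -
  have sH: "vec.subspace H" "vec.subspace H'" "vec.dim H = 4" "vec.dim H' = 4"
    using assms(1,2) unfolding pg_hyperplane_def pg_sub_def by auto
  have "H \<subseteq> H'"
  proof
    fix v assume v: "v \<in> H"
    show "v \<in> H'"
    proof (cases "v = 0")
      case True then show ?thesis using sH vec.subspace_0 by blast
    next
      case False
      have "vec.span {v} \<subseteq> H" using v sH vec.span_minimal by blast
      then obtain L where "L \<in> S" "vec.span {v} \<subseteq> L"
        using assms(3) point_span[OF False] unfolding line_spread_def by blast
      moreover have "L \<subseteq> H'" using assms(4) \<open>L \<in> S\<close> unfolding line_spread_def by blast
      ultimately show ?thesis using vec.span_base[of v "{v}"] by blast
    qed
  qed
  then show ?thesis using sub_eq[of H H'] sH by simp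
qed

lemma lp_D:
  fixes \<Omega> :: "('a::field ^ 5) set set set"
  assumes "line_partition \<Omega>"
  shows "\<forall>S\<in>\<Omega>. S \<noteq> {}" "\<Union>\<Omega> = {L. pg_line L}"
    "\<forall>S\<in>\<Omega>. \<forall>T\<in>\<Omega>. S \<noteq> T \<longrightarrow> S \<inter> T = {}"
    "\<forall>S\<in>\<Omega>. \<exists>H. pg_hyperplane H \<and> line_spread H S"
    "\<forall>H. pg_hyperplane H \<longrightarrow> (\<exists>!S. S \<in> \<Omega> \<and> (\<forall>L\<in>S. L \<subseteq> H))"
  using assms unfolding line_partition_def by simp_all

lemma pi_eq:
  fixes \<Omega> :: "('a::field ^ 5) set set set"
  assumes "line_partition \<Omega>" "S \<in> \<Omega>" "L \<in> S" "pg_hyperplane H" "line_spread H S"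
  shows "pi_Omega \<Omega> L = H"
  unfolding pi_Omega_def
proof (rule the_equality)
  show "pg_hyperplane H \<and> (\<exists>S\<in>\<Omega>. L \<in> S \<and> line_spread H S)" using assms by blast
next
  fix H' assume h: "pg_hyperplane H' \<and> (\<exists>S\<in>\<Omega>. L \<in> S \<and> line_spread H' S)"
  then obtain S' where S': "S' \<in> \<Omega>" "L \<in> S'" "line_spread H' S'" by blast
  have disj: "\<forall>S\<in>\<Omega>. \<forall>T\<in>\<Omega>. S \<noteq> T \<longrightarrow> S \<inter> T = {}"
    using lp_D(3)[OF assms(1)] .
  have "S' = S"
  proof (rule ccontr)
    assume "S' \<noteq> S"
    then have "S' \<inter> S = {}" using disj S'(1) assms(2) by blast
    then show False using S'(2) assms(3) by blast
  qed
  then have "line_spread H' S" using S'(3) by simp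
  then show "H' = H" using spread_hyp_unique[of H' H S] h assms(4,5) by blast
qed

lemma pi_props:
  fixes \<Omega> :: "('a::field ^ 5) set set set"
  assumes "line_partition \<Omega>" "pg_line L"
  shows "pg_hyperplane (pi_Omega \<Omega> L) \<and> L \<subseteq> pi_Omega \<Omega> L \<and>
         (\<exists>S\<in>\<Omega>. L \<in> S \<and> line_spread (pi_Omega \<Omega> L) S)"
proof -
  have "L \<in> \<Union>\<Omega>" using lp_D(2)[OF assms(1)] assms(2) by simp
  then obtain S where S: "S \<in> \<Omega>" "L \<in> S" by blast
  then obtain H where H: "pg_hyperplane H" "line_spread H S" using lp_D(4)[OF assms(1)] by blast
  have e: "pi_Omega \<Omega> L = H" using pi_eq[OF assms(1) S H] .
  have "L \<subseteq> H" using H(2) S(2) unfolding line_spread_def by blast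
  then show ?thesis using S H e by blast
qed

lemma pencil_lemma:
  fixes \<Omega> :: "('a::field ^ 5) set set set"
  assumes lin: "linear_line_partition \<Omega>"
    and P: "pg_point P" and \<sigma>: "pg_plane \<sigma>" and P\<sigma>: "P \<subseteq> \<sigma>"
    and L0: "L0 \<in> line_pencil P \<sigma>" and L1: "L1 \<in> line_pencil P \<sigma>"
    and L2: "L2 \<in> line_pencil P \<sigma>"
    and d01: "L0 \<noteq> L1" and d02: "L0 \<noteq> L2" and d12: "L1 \<noteq> L2"
    and s0: "\<sigma> \<subseteq> pi_Omega \<Omega> L0"
  shows "\<sigma> \<subseteq> pi_Omega \<Omega> L1"
proof -
  let ?pi = "pi_Omega \<Omega>"
  have lp: "line_partition \<Omega>" using lin unfolding linear_line_partition_def by blast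
  obtain W where W: "pg_sub 2 W" and bij: "bij_betw ?pi (line_pencil P \<sigma>) (hyperplane_pencil W)"
    using lin P \<sigma> P\<sigma> unfolding linear_line_partition_def by blast
  have sW: "vec.subspace W" "vec.dim W = 3" using W unfolding pg_sub_def by auto
  have s\<sigma>: "vec.subspace \<sigma>" "vec.dim \<sigma> = 3" using \<sigma> unfolding pg_plane_def pg_sub_def by auto
  have img: "pg_hyperplane (?pi L) \<and> W \<subseteq> ?pi L" if "L \<in> line_pencil P \<sigma>" for L
    using bij_betwE[OF bij] that unfolding hyperplane_pencil_def by blast
  have inj: "inj_on ?pi (line_pencil P \<sigma>)" using bij bij_betw_def by blast
  have lineL: "pg_line L \<and> L \<subseteq> \<sigma>" if "L \<in> line_pencil P \<sigma>" for L
    using that unfolding line_pencil_def by blast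
  have hyp: "vec.subspace (?pi L) \<and> vec.dim (?pi L) = 4 \<and> L \<subseteq> ?pi L" if "L \<in> line_pencil P \<sigma>" for L
    using pi_props[OF lp, of L] lineL[OF that] unfolding pg_hyperplane_def pg_sub_def by auto
  have sub: "L \<subseteq> W" if L: "L \<in> line_pencil P \<sigma>" and ne: "L \<noteq> L0" for L
  proof (rule ccontr)
    assume nW: "\<not> L \<subseteq> W"
    let ?U = "vec.span (W \<union> L)"
    have "vec.span W \<subset> vec.span (W \<union> L)"
    proof
      show "vec.span W \<subseteq> vec.span (W \<union> L)" by (rule vec.span_mono) blast
      show "vec.span W \<noteq> vec.span (W \<union> L)"
        using nW vec.span_superset[of "W \<union> L"] sW(1) vec.span_eq_iff by blast
    qed
    then have "vec.dim W < vec.dim (W \<union> L)" by (rule vec.dim_psubset)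
    then have dU: "vec.dim ?U \<ge> 4" using sW by simp
    have U1: "?U \<subseteq> ?pi L"
      using img[OF L] hyp[OF L] by (intro vec.span_minimal) auto
    have U2: "?U \<subseteq> ?pi L0"
      using img[OF L0] hyp[OF L0] lineL[OF L] s0 by (intro vec.span_minimal) auto
    have "?U = ?pi L" using sub_eq[OF vec.subspace_span _ U1] hyp[OF L] dU by simp
    then have "?pi L \<subseteq> ?pi L0" using U2 by simp
    then have "?pi L = ?pi L0" using sub_eq[of "?pi L" "?pi L0"] hyp[OF L] hyp[OF L0] by simp
    then show False using inj L L0 ne unfolding inj_on_def by blast
  qed
  have W1: "L1 \<subseteq> W" using sub[OF L1] d01 by blast
  have W2: "L2 \<subseteq> W" using sub[OF L2] d02 by blast
  have l1: "vec.subspace L1" "vec.dim L1 = 2" and l2: "vec.subspace L2" "vec.dim L2 = 2"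
    using lineL[OF L1] lineL[OF L2] unfolding pg_line_def pg_sub_def by auto
  have n21: "\<not> L2 \<subseteq> L1"
    using sub_eq[of L2 L1] l1 l2 d12 by auto
  have "vec.span L1 \<subset> vec.span (L1 \<union> L2)"
  proof
    show "vec.span L1 \<subseteq> vec.span (L1 \<union> L2)" by (rule vec.span_mono) blast
    show "vec.span L1 \<noteq> vec.span (L1 \<union> L2)"
      using n21 vec.span_superset[of "L1 \<union> L2"] l1(1) vec.span_eq_iff by blast
  qed
  then have "vec.dim L1 < vec.dim (L1 \<union> L2)" by (rule vec.dim_psubset)
  then have dV: "vec.dim (vec.span (L1 \<union> L2)) \<ge> 3" using l1 by simp
  have V1: "vec.span (L1 \<union> L2) \<subseteq> W" using W1 W2 sW by (intro vec.span_minimal) auto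
  have V2: "vec.span (L1 \<union> L2) \<subseteq> \<sigma>" using lineL[OF L1] lineL[OF L2] s\<sigma> by (intro vec.span_minimal) auto
  have "vec.span (L1 \<union> L2) = W" using sub_eq[OF vec.subspace_span sW(1) V1] sW dV by simp
  moreover have "vec.span (L1 \<union> L2) = \<sigma>" using sub_eq[OF vec.subspace_span s\<sigma>(1) V2] s\<sigma> dV by simp
  ultimately have "W = \<sigma>" by simp
  then show ?thesis using img[OF L1] by simp
qed


lemma key_lemma:
  fixes \<Omega> :: "('a::field ^ 5) set set set" and a a2 b :: "'a ^ 5"
  assumes lin: "linear_line_partition \<Omega>"
    and a0: "a \<noteq> 0" and a2: "a2 \<notin> vec.span {a}" and b: "b \<notin> vec.span {a, a2}"
    and h: "vec.span {a, a2, b} \<subseteq> pi_Omega \<Omega> (vec.span {a, a2})"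
  shows "vec.span {a, a2, b} \<subseteq> pi_Omega \<Omega> (vec.span {a, b})"
proof -
  let ?P = "vec.span {a}" and ?\<sigma> = "vec.span {a, a2, b}"
  let ?L0 = "vec.span {a, a2}" and ?M = "vec.span {a, b}" and ?N = "vec.span {a, a2 + b}"
  have e2: "{a, a2} = insert a2 {a}" by auto
  have e3: "{a, a2, b} = insert b {a, a2}" by auto
  have eM: "{a, b} = insert b {a}" by auto
  have eN: "{a, a2 + b} = insert (a2 + b) {a}" by auto
  have sa: "vec.span {a} \<subseteq> vec.span {a, a2}" by (rule vec.span_mono) blast
  have bM: "b \<notin> vec.span {a}" using b sa by blast
  have bL0: "a2 + b \<notin> vec.span {a, a2}"
  proof
    assume "a2 + b \<in> vec.span {a, a2}"
    moreover have "a2 \<in> vec.span {a, a2}" by (rule vec.span_base) simp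
    ultimately have "(a2 + b) - a2 \<in> vec.span {a, a2}" by (rule vec.span_diff)
    then show False using b by simp
  qed
  have bN: "a2 + b \<notin> vec.span {a}" using bL0 sa by blast
  have d2: "vec.dim {a, a2} = 2" unfolding e2 using a0 a2 by (simp add: vec.dim_insert)
  have d3: "vec.dim {a, a2, b} = 3" unfolding e3 using b d2 by (simp add: vec.dim_insert)
  have dM: "vec.dim {a, b} = 2" unfolding eM using a0 bM by (simp add: vec.dim_insert)
  have dN: "vec.dim {a, a2 + b} = 2" unfolding eN using a0 bN by (simp add: vec.dim_insert)
  have P: "pg_point ?P" using point_span[OF a0] .
  have \<sigma>: "pg_plane ?\<sigma>" unfolding pg_plane_def pg_sub_def using d3 by simp
  have P\<sigma>: "?P \<subseteq> ?\<sigma>" by (rule vec.span_mono) blast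
  have L0: "?L0 \<in> line_pencil ?P ?\<sigma>" unfolding line_pencil_def pg_line_def pg_sub_def
    using d2 sa by (auto intro!: vec.span_mono)
  have M: "?M \<in> line_pencil ?P ?\<sigma>" unfolding line_pencil_def pg_line_def pg_sub_def
    using dM by (auto intro!: vec.span_mono)
  have abs: "a2 + b \<in> ?\<sigma>" by (intro vec.span_add vec.span_base) auto
  have N\<sigma>: "?N \<subseteq> ?\<sigma>" using abs by (intro vec.span_minimal) (auto intro: vec.span_base)
  have N: "?N \<in> line_pencil ?P ?\<sigma>" unfolding line_pencil_def pg_line_def pg_sub_def
    using dN N\<sigma> by (auto intro!: vec.span_mono)
  have bMM: "b \<in> ?M" by (rule vec.span_base) simp
  have bNN: "a2 + b \<in> ?N" by (rule vec.span_base) simp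
  have d01: "?L0 \<noteq> ?M" using bMM b by auto
  have d02: "?L0 \<noteq> ?N" using bNN bL0 by auto
  have d12: "?M \<noteq> ?N"
  proof
    assume "?M = ?N"
    then have "a2 + b \<in> ?M" using bNN by simp
    then have "(a2 + b) - b \<in> ?M" using bMM by (rule vec.span_diff)
    then have "a2 \<in> vec.span (insert b {a})" using eM by simp
    then obtain k where k: "a2 - k *s b \<in> vec.span {a}" using vec.span_breakdown_eq by blast
    show False
    proof (cases "k = 0")
      case True then show False using k a2 by simp
    next
      case False
      have "a2 \<in> ?L0" by (rule vec.span_base) simp
      moreover have "a2 - k *s b \<in> ?L0" using k sa by blast
      ultimately have "a2 - (a2 - k *s b) \<in> ?L0" by (rule vec.span_diff)
      then have "k *s b \<in> ?L0" by simp
      then have "inverse k *s (k *s b) \<in> ?L0" by (rule vec.span_scale)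
      then have "b \<in> ?L0" using False by simp
      then show False using b by simp
    qed
  qed
  show ?thesis using pencil_lemma[OF lin P \<sigma> P\<sigma> L0 M N d01 d02 d12 h] .
qed


lemma ex1_same: "\<exists>!x. P x \<Longrightarrow> P a \<Longrightarrow> P b \<Longrightarrow> a = b"
  by (erule ex1E) (metis)

lemma two_basis:
  fixes L :: "('a::field ^ 5) set"
  assumes "vec.subspace L" "vec.dim L = 2" "a \<in> L" "a \<noteq> 0"
  obtains a2 where "a2 \<in> L" "a2 \<notin> vec.span {a}" "L = vec.span {a, a2}"
proof -
  have "\<not> L \<subseteq> vec.span {a}"
  proof
    assume "L \<subseteq> vec.span {a}"
    then have "vec.dim L \<le> vec.dim (vec.span {a})" by (rule vec.dim_subset)
    then show False using assms by simp
  qed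
  then obtain a2 where a2: "a2 \<in> L" "a2 \<notin> vec.span {a}" by blast
  have e2: "{a, a2} = insert a2 {a}" by auto
  have d2: "vec.dim {a, a2} = 2" unfolding e2 using assms a2 by (simp add: vec.dim_insert)
  have sub: "vec.span {a, a2} \<subseteq> L" using assms a2 by (intro vec.span_minimal) auto
  have "vec.span {a, a2} = L" using sub_eq[OF vec.subspace_span assms(1) sub] d2 assms by simp
  then show ?thesis using that a2 by blast
qed

lemma nonzero_in:
  fixes L :: "('a::field ^ 5) set"
  assumes "vec.dim L = 2"
  obtains a where "a \<in> L" "a \<noteq> 0"
proof -
  have "\<not> L \<subseteq> {0}"
  proof
    assume "L \<subseteq> {0}"
    then have "vec.dim L = 0" using vec.dim_eq_0 by blast
    then show False using assms by simp
  qed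
  then show ?thesis using that by blast
qed

theorem proposition7p3:
  fixes \<Omega> :: "('a::field ^ 5) set set set"
  shows "\<not> linear_line_partition \<Omega>"
proof
  assume lin: "linear_line_partition \<Omega>"
  have lp: "line_partition \<Omega>" using lin unfolding linear_line_partition_def by blast
  have "2 \<le> vec.dim (UNIV :: ('a ^ 5) set)" using vec_dim_card[where 'a='a and 'n=5] by simp
  then obtain T :: "('a ^ 5) set" where T: "vec.subspace T" "vec.dim T = 2"
    using vec.choose_subspace_of_subspace by metis
  have lT: "pg_line T" unfolding pg_line_def pg_sub_def using T by simp
  then have "T \<in> \<Union>\<Omega>" using lp_D(2)[OF lp] by simp
  then obtain S where S: "S \<in> \<Omega>" "T \<in> S" by blast
  then obtain H where H: "pg_hyperplane H" "line_spread H S" using lp_D(4)[OF lp] by blast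
  have sH: "vec.subspace H" "vec.dim H = 4" using H(1) unfolding pg_hyperplane_def pg_sub_def by auto
  have spr1: "\<forall>L\<in>S. pg_line L \<and> L \<subseteq> H" using H(2) unfolding line_spread_def by blast
  have spr2: "\<And>Q. pg_point Q \<Longrightarrow> Q \<subseteq> H \<Longrightarrow> \<exists>!L. L \<in> S \<and> Q \<subseteq> L"
  proof -
    have "\<forall>P. pg_point P \<and> P \<subseteq> H \<longrightarrow> (\<exists>!L. L \<in> S \<and> P \<subseteq> L)"
      using H(2) unfolding line_spread_def by (rule conjunct2)
    then show "\<And>Q. pg_point Q \<Longrightarrow> Q \<subseteq> H \<Longrightarrow> \<exists>!L. L \<in> S \<and> Q \<subseteq> L" by simp
  qed
  have TH: "T \<subseteq> H" using spr1 S by blast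
  obtain a where a: "a \<in> T" "a \<noteq> 0" using nonzero_in[OF T(2)] by blast
  obtain a2 where a2: "a2 \<in> T" "a2 \<notin> vec.span {a}" "T = vec.span {a, a2}"
    using two_basis[OF T a] by blast
  have "\<not> H \<subseteq> T"
  proof
    assume "H \<subseteq> T"
    then have "vec.dim H \<le> vec.dim T" by (rule vec.dim_subset)
    then show False using sH T by simp
  qed
  then obtain b where b: "b \<in> H" "b \<notin> T" by blast
  have b0: "b \<noteq> 0" using b T(1) vec.subspace_0 by blast
  have bH: "vec.span {b} \<subseteq> H" using b sH by (intro vec.span_minimal) auto
  obtain L2 where L2: "L2 \<in> S" "vec.span {b} \<subseteq> L2" using spr2[OF point_span[OF b0] bH] by blast
  have bL2: "b \<in> L2" using L2(2) vec.span_base[of b "{b}"] by blast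
  have lL2': "pg_line L2 \<and> L2 \<subseteq> H" using spr1 L2(1) by blast
  have lL2: "vec.subspace L2" "vec.dim L2 = 2" "L2 \<subseteq> H"
    using lL2' unfolding pg_line_def pg_sub_def by simp_all
  obtain b2 where b2: "b2 \<in> L2" "b2 \<notin> vec.span {b}" "L2 = vec.span {b, b2}"
    using two_basis[OF lL2(1,2) bL2 b0] by blast
  have piT: "pi_Omega \<Omega> T = H" using pi_eq[OF lp S H] .
  have piL2: "pi_Omega \<Omega> L2 = H" using pi_eq[OF lp S(1) L2(1) H] .
  have int0: "v = 0" if "v \<in> T" "v \<in> L2" for v
  proof (rule ccontr)
    assume v0: "v \<noteq> 0"
    have vH: "vec.span {v} \<subseteq> H" using that TH sH by (intro vec.span_minimal) auto
    have "vec.span {v} \<subseteq> T" using that T(1) by (intro vec.span_minimal) auto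
    moreover have "vec.span {v} \<subseteq> L2" using that lL2(1) by (intro vec.span_minimal) auto
    ultimately have "T = L2" using S(2) L2(1) by (intro ex1_same[OF spr2[OF point_span[OF v0] vH]]) simp_all
    then show False using b bL2 by simp
  qed
  have aL2: "a \<notin> vec.span {b, b2}" using int0 a b2(3) by blast
  have k1: "vec.span {a, a2, b} \<subseteq> pi_Omega \<Omega> (vec.span {a, b})"
  proof (rule key_lemma[OF lin a(2) a2(2)])
    show "b \<notin> vec.span {a, a2}" using b a2(3) by simp
    show "vec.span {a, a2, b} \<subseteq> pi_Omega \<Omega> (vec.span {a, a2})"
      using piT a2(3) a2(1) a(1) TH b(1) sH by (intro vec.span_minimal) auto
  qed
  have k2: "vec.span {b, b2, a} \<subseteq> pi_Omega \<Omega> (vec.span {b, a})"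
  proof (rule key_lemma[OF lin b0 b2(2) aL2])
    show "vec.span {b, b2, a} \<subseteq> pi_Omega \<Omega> (vec.span {b, b2})"
      using piL2 b2 bL2 lL2 a(1) TH sH by (intro vec.span_minimal) auto
  qed
  let ?M = "vec.span {a, b}"
  have eba: "{b, a} = {a, b}" by auto
  have lM: "pg_line ?M"
  proof -
    have "b \<notin> vec.span {a}"
    proof
      assume "b \<in> vec.span {a}"
      moreover have "vec.span {a} \<subseteq> T" using a T(1) by (intro vec.span_minimal) auto
      ultimately show False using b by blast
    qed
    moreover have "{a, b} = insert b {a}" by auto
    ultimately have "vec.dim {a, b} = 2" using a(2) by (simp add: vec.dim_insert)
    then show ?thesis unfolding pg_line_def pg_sub_def by simp
  qed
  have pM: "pg_hyperplane (pi_Omega \<Omega> ?M) \<and> ?M \<subseteq> pi_Omega \<Omega> ?M \<and>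
         (\<exists>S\<in>\<Omega>. ?M \<in> S \<and> line_spread (pi_Omega \<Omega> ?M) S)" using pi_props[OF lp lM] .
  have sPM: "vec.subspace (pi_Omega \<Omega> ?M)" "vec.dim (pi_Omega \<Omega> ?M) = 4"
    using conjunct1[OF pM] unfolding pg_hyperplane_def pg_sub_def by simp_all
  let ?X = "vec.span {a, a2, b, b2}"
  have X1: "?X \<subseteq> pi_Omega \<Omega> ?M"
  proof (intro vec.span_minimal sPM(1))
    have "a \<in> vec.span {a, a2, b}" "a2 \<in> vec.span {a, a2, b}" "b \<in> vec.span {a, a2, b}"
      by (auto intro: vec.span_base)
    moreover have "b2 \<in> vec.span {b, b2, a}" by (auto intro: vec.span_base)
    ultimately show "{a, a2, b, b2} \<subseteq> pi_Omega \<Omega> ?M" using k1 k2 eba by auto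
  qed
  have X2: "?X \<subseteq> H" using a a2 b b2 lL2 TH sH by (intro vec.span_minimal) auto
  have dX: "vec.dim {a, a2, b, b2} = 4"
  proof -
    have e2: "{a, a2} = insert a2 {a}" by auto
    have e3: "{a, a2, b} = insert b {a, a2}" by auto
    have e4: "{a, a2, b, b2} = insert b2 {a, a2, b}" by auto
    have d2: "vec.dim {a, a2} = 2" unfolding e2 using a a2 by (simp add: vec.dim_insert)
    have bs: "b \<notin> vec.span {a, a2}" using b a2(3) by simp
    have d3: "vec.dim {a, a2, b} = 3" unfolding e3 using bs d2 by (simp add: vec.dim_insert)
    have b2s: "b2 \<notin> vec.span {a, a2, b}"
    proof
      assume "b2 \<in> vec.span {a, a2, b}"
      then obtain k where k: "b2 - k *s b \<in> vec.span {a, a2}"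
        unfolding e3 using vec.span_breakdown_eq by blast
      have "b2 - k *s b \<in> L2" using b2(1) bL2 lL2(1)
        by (intro vec.subspace_diff vec.subspace_scale) auto
      then have "b2 - k *s b = 0" using int0 k a2(3) by blast
      then have "b2 = k *s b" by simp
      moreover have "k *s b \<in> vec.span {b}" by (intro vec.span_scale vec.span_base) simp
      ultimately show False using b2(2) by simp
    qed
    show ?thesis unfolding e4 using b2s d3 by (simp add: vec.dim_insert)
  qed
  have "?X = pi_Omega \<Omega> ?M" using sub_eq[OF vec.subspace_span sPM(1) X1] sPM dX by simp
  moreover have "?X = H" using sub_eq[OF vec.subspace_span sH(1) X2] sH dX by simp
  ultimately have piM: "pi_Omega \<Omega> ?M = H" by simp
  obtain S' where S': "S' \<in> \<Omega>" "?M \<in> S'" "line_spread H S'" using pM piM by auto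
  have ex: "\<exists>!S. S \<in> \<Omega> \<and> (\<forall>L\<in>S. L \<subseteq> H)" using lp_D(5)[OF lp] H(1) by simp
  have "\<forall>L\<in>S'. pg_line L \<and> L \<subseteq> H" using S'(3) unfolding line_spread_def by (rule conjunct1)
  then have c1: "S' \<in> \<Omega> \<and> (\<forall>L\<in>S'. L \<subseteq> H)" using S'(1) by simp
  have c2: "S \<in> \<Omega> \<and> (\<forall>L\<in>S. L \<subseteq> H)" using spr1 S(1) by simp
  have "S' = S" by (rule ex1_same[OF ex c1 c2])
  then have MS: "?M \<in> S" using S'(2) by simp
  have aH: "vec.span {a} \<subseteq> H" using a TH sH by (intro vec.span_minimal) auto
  have "vec.span {a} \<subseteq> T" using a T(1) by (intro vec.span_minimal) auto
  moreover have "vec.span {a} \<subseteq> ?M" by (rule vec.span_mono) blast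
  ultimately have "?M = T" using MS S(2) by (intro ex1_same[OF spr2[OF point_span[OF a(2)] aH]]) simp_all
  moreover have "b \<in> ?M" by (rule vec.span_base) simp
  ultimately show False using b by simp
qed

end
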